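(* Let $m\ge1$ and let $X_1,X_2,\dots$ be i.i.d. random words in $\{0,1\}^m$, where word $\mathbf{w}_i$ has probability $P_i$ and the words are indexed so that $P_1\ge P_2\ge\dots\ge P_{2^m}$. Let $\mathbf{y}_1,\dots,\mathbf{y}_{2^m}$ be the distinct words of $\{0,1\}^m$ listed in order of nondecreasing cost, with $c_i=c(\mathbf{y}_i)$, and let $\phi$ be the direct shaping encoder (described in the context). Let $C_t=c(\phi(X_1,\dots,X_t))/t$, where $c(\phi(X_1,\dots,X_t))$ is the sum of the costs of the first $t$ output codewords. Then the asymptotic expected average cost satisfies $$C_\infty=\lim_{t\to\infty}E(C_t)=\sum_i P_ic_i.$$
   Context: Direct shaping code: the encoder maintains a list of all $2^m$ input words paired with frequency counts $n_k$ (initially all $0$, words ordered lexicographically), kept in nonincreasing order of counts. When input word $\mathbf{x}$ arrives, it is mapped to the output word $\mathbf{y}_k$ occupying the same position $k$ as $\mathbf{x}$ in the list; then the count of $\mathbf{x}$ is increased by one, from $n$ to $n+1$, and $\mathbf{x}$ is moved above all pairs with counts less than or equal to $n+1$. Costs: each codeword $\mathbf{y}$ has a cost $c(\mathbf{y})$ (e.g. for SLC flash, the number of $0$ symbols in $\mathbf{y}$), and the cost of a sequence of codewords is the sum of their costs. No channel errors are assumed. *)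

theory Defs
  imports Complex_Main
begin

(* Binary words of length m are modelled as bool lists (False = 0, True = 1). *)

fun lex_words :: "nat \<Rightarrow> bool list list" where
  "lex_words 0 = [[]]"
| "lex_words (Suc m) = map (Cons False) (lex_words m) @ map (Cons True) (lex_words m)"

(* 0-based position of x in the list L *)
definition pos :: "'a list \<Rightarrow> 'a \<Rightarrow> nat" where
  "pos L x = length (takeWhile (\<lambda>z. z \<noteq> x) L)"

definition move_up :: "('a \<Rightarrow> nat) \<Rightarrow> 'a \<Rightarrow> 'a list \<Rightarrow> 'a list" where
  "move_up n x L = takeWhile (\<lambda>z. n z > n x) L @ [x] @ dropWhile (\<lambda>z. n z > n x) L"

(* Direct shaping encoder: ys is the output-word list (ordered by nondecreasing cost),
   the state is the current list of input words together with their counts. *)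
fun encode :: "'a list \<Rightarrow> 'a list \<times> ('a \<Rightarrow> nat) \<Rightarrow> 'a list \<Rightarrow> 'a list" where
  "encode ys st [] = []"
| "encode ys (L, n) (x # xs) =
     (let n' = n(x := Suc (n x));
          L' = move_up n' x (removeAll x L)
      in ys ! pos L x # encode ys (L', n') xs)"

definition phi :: "nat \<Rightarrow> bool list list \<Rightarrow> bool list list \<Rightarrow> bool list list" where
  "phi m ys xs = encode ys (lex_words m, (\<lambda>_. 0)) xs"

(* E(C_t): expectation over i.i.d. inputs X_1..X_t with distribution P on {0,1}^m *)
definition expected_avg_cost ::
  "nat \<Rightarrow> (bool list \<Rightarrow> real) \<Rightarrow> (bool list \<Rightarrow> real) \<Rightarrow> bool list list \<Rightarrow> nat \<Rightarrow> real" where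
  "expected_avg_cost m P c ys t =
     (\<Sum>xs\<in>{xs. length xs = t \<and> (\<forall>x\<in>set xs. length x = m)}.
        prod_list (map P xs) * (sum_list (map c (phi m ys xs)) / real t))"

end

theory Submission
  imports Defs "HOL-Library.Multiset" "HOL-Analysis.Analysis"
begin


definition stp :: "('a list \<times> ('a \<Rightarrow> nat)) \<Rightarrow> 'a \<Rightarrow> ('a list \<times> ('a \<Rightarrow> nat))" where
  "stp s x = (let n' = (snd s)(x := Suc (snd s x)) in (move_up n' x (removeAll x (fst s)), n'))"

lemma encode_snoc:
  "encode ys s (xs @ [x]) = encode ys s xs @ [ys ! pos (fst (foldl stp s xs)) x]"
proof (induction xs arbitrary: s)
  case Nil
  then show ?case by (cases s) simp
next
  case (Cons a xs)
  then show ?case by (cases s) (simp add: stp_def Let_def)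
qed

lemma counts_foldl:
  "snd (foldl stp s xs) = (\<lambda>z. snd s z + count_list xs z)"
  by (induction xs arbitrary: s) (auto simp: stp_def Let_def)

lemma move_up_sorted:
  assumes "sorted_wrt (\<lambda>a b. n a \<ge> n b) R"
  shows "sorted_wrt (\<lambda>a b. n a \<ge> n b) (move_up n x R)"
proof -
  let ?Q = "\<lambda>z. n z > n x"
  have R: "R = takeWhile ?Q R @ dropWhile ?Q R" by simp
  have s: "sorted_wrt (\<lambda>a b. n a \<ge> n b) (takeWhile ?Q R)"
      "sorted_wrt (\<lambda>a b. n a \<ge> n b) (dropWhile ?Q R)"
      "\<forall>a\<in>set (takeWhile ?Q R). \<forall>b\<in>set (dropWhile ?Q R). n a \<ge> n b"
    using assms R sorted_wrt_append[of _ "takeWhile ?Q R" "dropWhile ?Q R"] by metis+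
  have d: "\<forall>z\<in>set (dropWhile ?Q R). n z \<le> n x"
  proof (cases "dropWhile ?Q R")
    case Nil then show ?thesis by (metis empty_iff list.set(1))
  next
    case (Cons d D)
    have "\<not> ?Q d" using Cons hd_dropWhile[of ?Q R] by (metis list.sel(1) list.simps(3))
    moreover have "\<forall>z\<in>set D. n z \<le> n d" using s(2) Cons by simp
    ultimately show ?thesis using Cons by fastforce
  qed
  have t: "\<forall>z\<in>set (takeWhile ?Q R). n z > n x"
    by (meson set_takeWhileD)
  show ?thesis unfolding move_up_def
    using s d t by (auto simp: sorted_wrt_append less_imp_le)
qed

definition invL :: "'a set \<Rightarrow> ('a \<Rightarrow> nat) \<Rightarrow> 'a list \<Rightarrow> bool" where
  "invL W n L \<longleftrightarrow> distinct L \<and> set L = W \<and> sorted_wrt (\<lambda>a b. n a \<ge> n b) L"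

lemma set_move_up: "set (move_up n x R) = insert x (set R)"
proof -
  have "set R = set (takeWhile (\<lambda>z. n z > n x) R) \<union> set (dropWhile (\<lambda>z. n z > n x) R)"
    by (metis set_append takeWhile_dropWhile_id)
  then show ?thesis by (auto simp: move_up_def)
qed

lemma distinct_move_up: "x \<notin> set R \<Longrightarrow> distinct R \<Longrightarrow> distinct (move_up n x R)"
proof -
  assume a: "x \<notin> set R" "distinct R"
  let ?T = "takeWhile (\<lambda>z. n z > n x) R" and ?D = "dropWhile (\<lambda>z. n z > n x) R"
  have "distinct ?T \<and> distinct ?D \<and> set ?T \<inter> set ?D = {}"
    using distinct_append[of ?T ?D] a(2) by (metis takeWhile_dropWhile_id)
  moreover have "x \<notin> set ?T" "x \<notin> set ?D" using a
    by (meson set_takeWhileD, meson set_dropWhileD)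
  ultimately show ?thesis by (auto simp: move_up_def)
qed

lemma invL_stp:
  assumes "invL W n L" "x \<in> W"
  shows "invL W (snd (stp (L, n) x)) (fst (stp (L, n) x))"
proof -
  let ?n' = "n(x := Suc (n x))"
  have "sorted_wrt (\<lambda>a b. n a \<ge> n b) (removeAll x L)"
    using assms(1) unfolding invL_def by (simp add: sorted_wrt_filter removeAll_filter_not_eq)
  then have "sorted_wrt (\<lambda>a b. ?n' a \<ge> ?n' b) (removeAll x L)"
    by (rule sorted_wrt_mono_rel[rotated]) auto
  then have "sorted_wrt (\<lambda>a b. ?n' a \<ge> ?n' b) (move_up ?n' x (removeAll x L))"
    by (rule move_up_sorted)
  moreover have "set (move_up ?n' x (removeAll x L)) = W"
    using assms unfolding invL_def by (auto simp: set_move_up)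
  moreover have "distinct (move_up ?n' x (removeAll x L))"
    using assms unfolding invL_def by (auto intro!: distinct_move_up distinct_removeAll)
  ultimately show ?thesis unfolding stp_def Let_def invL_def by simp
qed

lemma invL_foldl:
  assumes "invL W (snd s) (fst s)" "set xs \<subseteq> W"
  shows "invL W (snd (foldl stp s xs)) (fst (foldl stp s xs))"
  using assms
proof (induction xs arbitrary: s)
  case Nil then show ?case by simp
next
  case (Cons a xs)
  have "invL W (snd (stp s a)) (fst (stp s a))"
    using invL_stp[of W "snd s" "fst s" a] Cons.prems by (cases s) auto
  then show ?case using Cons by simp
qed

lemma pos_nth: "distinct L \<Longrightarrow> i < length L \<Longrightarrow> pos L (L ! i) = i"
proof (induction L arbitrary: i)
  case Nil then show ?case by simp
next
  case (Cons a L)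
  then show ?case by (cases i) (auto simp: pos_def)
qed

lemma sum_pos:
  assumes "distinct L" "set L = W"
  shows "(\<Sum>x\<in>W. G x (pos L x)) = (\<Sum>i<length L. G (L ! i) i)"
proof -
  have b: "bij_betw ((!) L) {..<length L} W" using assms by (intro bij_betw_nth) auto
  show ?thesis
    using sum.reindex_bij_betw[OF b, of "\<lambda>x. G x (pos L x)"] assms pos_nth
    by (metis (no_types, lifting) lessThan_iff sum.cong)
qed

lemma lex_words_set: "set (lex_words m) = {w. length w = m}"
proof (induction m)
  case 0 then show ?case by auto
next
  case (Suc m)
  show ?case
  proof
    show "set (lex_words (Suc m)) \<subseteq> {w. length w = Suc m}" using Suc by auto
    show "{w. length w = Suc m} \<subseteq> set (lex_words (Suc m))"
    proof
      fix w :: "bool list" assume "w \<in> {w. length w = Suc m}"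
      then obtain b v where "w = b # v" "length v = m" by (cases w) auto
      then show "w \<in> set (lex_words (Suc m))" using Suc by (cases b) auto
    qed
  qed
qed

lemma lex_words_distinct: "distinct (lex_words m)"
  by (induction m) (auto simp: distinct_map)




lemma good_map_eq:
  fixes P :: "'a \<Rightarrow> real"
  assumes "invL W n L" "distinct ws" "set ws = W"
    and "sorted_wrt (\<lambda>a b. P a \<ge> P b) ws"
    and good: "\<forall>a\<in>W. \<forall>b\<in>W. P a > P b \<longrightarrow> n a > n b"
  shows "map P L = map P ws"
proof -
  have L: "distinct L" "set L = W" "sorted_wrt (\<lambda>a b. n a \<ge> n b) L"
    using assms(1) by (auto simp: invL_def)
  have sL: "sorted_wrt (\<lambda>a b. P a \<ge> P b) L"
    using L(3) by (rule sorted_wrt_mono_rel[rotated]) (use good L(2) in force)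
  have s1: "sorted (rev (map P L))" using sL
    by (simp add: sorted_wrt_rev sorted_wrt_map)
  have s2: "sorted (rev (map P ws))" using assms(4)
    by (simp add: sorted_wrt_rev sorted_wrt_map)
  have "mset L = mset ws" using L assms(2,3) set_eq_iff_mset_eq_distinct by metis
  then have m: "mset (rev (map P L)) = mset (rev (map P ws))" by simp
  have "rev (map P L) = rev (map P ws)"
    using properties_for_sort[OF m[symmetric] s2] properties_for_sort[OF refl s1] m
    by (metis)
  then show ?thesis by simp
qed

lemma sum_h_eq:
  assumes "distinct L" "set L = W"
  shows "(\<Sum>x\<in>W. P x * c (ys ! pos L x)) = (\<Sum>i<length L. P (L ! i) * c (ys ! i))"
  using sum_pos[OF assms, of "\<lambda>x i. P x * c (ys ! i)"] by simp




lemma sumA_Suc: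
  assumes "finite W"
  shows "(\<Sum>xs\<in>{xs. set xs \<subseteq> W \<and> length xs = Suc t}. G xs)
       = (\<Sum>xs\<in>{xs. set xs \<subseteq> W \<and> length xs = t}. \<Sum>x\<in>W. G (xs @ [x]))"
proof -
  let ?A = "{xs. set xs \<subseteq> W \<and> length xs = t}"
  have eq: "{xs. set xs \<subseteq> W \<and> length xs = Suc t} = (\<lambda>(xs, x). xs @ [x]) ` (?A \<times> W)"
  proof
    show "{xs. set xs \<subseteq> W \<and> length xs = Suc t} \<subseteq> (\<lambda>(xs, x). xs @ [x]) ` (?A \<times> W)"
    proof
      fix ys assume ys: "ys \<in> {xs. set xs \<subseteq> W \<and> length xs = Suc t}"
      then have ne: "ys \<noteq> []" by auto
      then have "ys = butlast ys @ [last ys]" by simp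
      moreover note ne
      moreover have "butlast ys \<in> ?A" "last ys \<in> W" using ys \<open>ys \<noteq> []\<close>
        by (auto dest: in_set_butlastD)
      ultimately show "ys \<in> (\<lambda>(xs, x). xs @ [x]) ` (?A \<times> W)"
        by (metis (no_types, lifting) SigmaI case_prod_conv image_eqI)
    qed
  qed auto
  have inj: "inj_on (\<lambda>(xs, x). xs @ [x]) (?A \<times> W)"
    by (auto simp: inj_on_def)
  show ?thesis
    unfolding eq sum.reindex[OF inj] sum.cartesian_product
    by (intro sum.cong) (auto split: prod.splits)
qed

lemma finite_A: "finite W \<Longrightarrow> finite {xs. set xs \<subseteq> W \<and> length xs = t}"
  by (rule finite_lists_length_eq)

lemma moment0:
  fixes P :: "'a \<Rightarrow> real"
  assumes "finite W" "(\<Sum>x\<in>W. P x) = 1"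
  shows "(\<Sum>xs\<in>{xs. set xs \<subseteq> W \<and> length xs = t}. prod_list (map P xs)) = 1"
proof (induction t)
  case 0
  have "{xs. set xs \<subseteq> W \<and> length xs = 0} = {[]}" by auto
  then show ?case by simp
next
  case (Suc t)
  show ?case
    unfolding sumA_Suc[OF assms(1)]
    by (simp add: sum_distrib_left[symmetric] assms(2) Suc)
qed

lemma moment1:
  fixes P f :: "'a \<Rightarrow> real"
  assumes "finite W" "(\<Sum>x\<in>W. P x) = 1" "(\<Sum>x\<in>W. P x * f x) = 0"
  shows "(\<Sum>xs\<in>{xs. set xs \<subseteq> W \<and> length xs = t}. prod_list (map P xs) * sum_list (map f xs)) = 0"
proof (induction t)
  case 0
  have "{xs. set xs \<subseteq> W \<and> length xs = 0} = {[]}" by auto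
  then show ?case by simp
next
  case (Suc t)
  have "(\<Sum>x\<in>W. prod_list (map P (xs @ [x])) * sum_list (map f (xs @ [x])))
      = prod_list (map P xs) * sum_list (map f xs)" for xs
  proof -
    have "(\<Sum>x\<in>W. prod_list (map P (xs @ [x])) * sum_list (map f (xs @ [x])))
      = (\<Sum>x\<in>W. prod_list (map P xs) * sum_list (map f xs) * P x + prod_list (map P xs) * (P x * f x))"
      by (rule sum.cong) (auto simp: algebra_simps)
    also have "\<dots> = prod_list (map P xs) * sum_list (map f xs)"
      by (simp add: sum.distrib sum_distrib_left[symmetric] assms)
    finally show ?thesis .
  qed
  then show ?case
    unfolding sumA_Suc[OF assms(1)] using Suc by simp
qed

lemma moment2:
  fixes P f :: "'a \<Rightarrow> real"
  assumes "finite W" "(\<Sum>x\<in>W. P x) = 1" "(\<Sum>x\<in>W. P x * f x) = 0"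
  shows "(\<Sum>xs\<in>{xs. set xs \<subseteq> W \<and> length xs = t}. prod_list (map P xs) * (sum_list (map f xs))^2)
       = real t * (\<Sum>x\<in>W. P x * (f x)^2)"
proof (induction t)
  case 0
  have "{xs. set xs \<subseteq> W \<and> length xs = 0} = {[]}" by auto
  then show ?case by simp
next
  case (Suc t)
  let ?K = "\<Sum>x\<in>W. P x * (f x)^2"
  have "(\<Sum>x\<in>W. prod_list (map P (xs @ [x])) * (sum_list (map f (xs @ [x])))^2)
      = prod_list (map P xs) * (sum_list (map f xs))^2 + prod_list (map P xs) * ?K" for xs
  proof -
    have "(\<Sum>x\<in>W. prod_list (map P (xs @ [x])) * (sum_list (map f (xs @ [x])))^2)
      = (\<Sum>x\<in>W. prod_list (map P xs) * (sum_list (map f xs))^2 * P x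
          + 2 * prod_list (map P xs) * sum_list (map f xs) * (P x * f x)
          + prod_list (map P xs) * (P x * (f x)^2))"
      by (rule sum.cong) (auto simp: algebra_simps power2_eq_square)
    also have "\<dots> = prod_list (map P xs) * (sum_list (map f xs))^2 + prod_list (map P xs) * ?K"
      by (simp add: sum.distrib sum_distrib_left[symmetric] assms)
    finally show ?thesis .
  qed
  then show ?case
    unfolding sumA_Suc[OF assms(1)]
    by (simp add: sum.distrib Suc sum_distrib_right[symmetric] moment0[OF assms(1,2)] algebra_simps)
qed

lemma cesaro:
  fixes g :: "nat \<Rightarrow> real"
  assumes "g \<longlonglongrightarrow> V"
  shows "(\<lambda>t. (\<Sum>s<t. g s) / real t) \<longlonglongrightarrow> V"
proof -
  define h where "h s = g s - V" for s
  have h0: "h \<longlonglongrightarrow> 0" using assms unfolding h_def by (simp add: LIM_zero)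
  have "(\<lambda>t. (\<Sum>s<t. h s) / real t) \<longlonglongrightarrow> 0"
  proof (rule LIMSEQ_I)
    fix r :: real assume r: "0 < r"
    obtain N where N: "\<And>s. s \<ge> N \<Longrightarrow> norm (h s) < r / 2"
      using LIMSEQ_D[OF h0, of "r/2"] r by auto
    define D where "D = (\<Sum>s<N. \<bar>h s\<bar>)"
    have D0: "D \<ge> 0" unfolding D_def by (simp add: sum_nonneg)
    define t0 where "t0 = N + nat \<lceil>2 * D / r\<rceil> + 1"
    show "\<exists>no. \<forall>t\<ge>no. norm ((\<Sum>s<t. h s) / real t - 0) < r"
    proof (intro exI allI impI)
      fix t assume t: "t \<ge> t0"
      then have tN: "t \<ge> N" and tpos: "real t > 0" unfolding t0_def by auto
      have tD: "real t > 2 * D / r" using t unfolding t0_def by linarith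
      have split: "{..<t} = {..<N} \<union> {N..<t}" using tN by auto
      have "\<bar>\<Sum>s<t. h s\<bar> \<le> (\<Sum>s<t. \<bar>h s\<bar>)" by (rule sum_abs)
      also have "\<dots> = D + (\<Sum>s\<in>{N..<t}. \<bar>h s\<bar>)"
        unfolding D_def split by (subst sum.union_disjoint) auto
      also have "(\<Sum>s\<in>{N..<t}. \<bar>h s\<bar>) \<le> (\<Sum>s\<in>{N..<t}. r / 2)"
        using N by (intro sum_mono) (auto simp: less_imp_le)
      also have "\<dots> \<le> real t * (r / 2)" using r tN by simp
      finally have b: "\<bar>\<Sum>s<t. h s\<bar> \<le> D + real t * (r / 2)" by simp
      have "D < real t * (r / 2)" using tD r by (simp add: field_simps)
      with b have "\<bar>\<Sum>s<t. h s\<bar> < real t * r" by linarith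
      then show "norm ((\<Sum>s<t. h s) / real t - 0) < r"
        using tpos by (simp add: field_simps abs_divide)
    qed
  qed
  then have "(\<lambda>t. (\<Sum>s<t. h s) / real t + V) \<longlonglongrightarrow> 0 + V" by (intro tendsto_add) auto
  moreover have "(\<Sum>s<t. h s) / real t + V = (\<Sum>s<t. g s) / real t" if "t \<ge> 1" for t
    using that by (simp add: h_def sum_subtractf field_simps)
  moreover have "eventually (\<lambda>t. (\<Sum>s<t. h s) / real t + V = (\<Sum>s<t. g s) / real t) sequentially"
    using calculation(2) unfolding eventually_sequentially by blast
  ultimately show ?thesis
    using tendsto_cong by force
qed

lemma sum_list_f:
  "sum_list (map (\<lambda>x. (if x = a then 1 else 0) - (if x = b then 1 else 0) - d) xs)
   = real (count_list xs a) - real (count_list xs b) - real (length xs) * (d::real)"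
  by (induction xs) (auto simp: algebra_simps)

lemma prod_list_nonneg_P:
  fixes P :: "'a \<Rightarrow> real"
  shows "\<forall>x\<in>W. P x \<ge> 0 \<Longrightarrow> set xs \<subseteq> W \<Longrightarrow> prod_list (map P xs) \<ge> 0"
  by (induction xs) auto

lemma bad_pair_bound:
  fixes P :: "'a \<Rightarrow> real"
  assumes W: "finite W" and P1: "(\<Sum>x\<in>W. P x) = 1" and P0: "\<forall>x\<in>W. P x \<ge> 0"
    and ab: "a \<in> W" "b \<in> W" "a \<noteq> b" "P a > P b" and t: "t > 0"
  shows "(\<Sum>xs\<in>{xs. set xs \<subseteq> W \<and> length xs = t}.
            prod_list (map P xs) * (if count_list xs a \<le> count_list xs b then 1 else 0))
       \<le> (\<Sum>x\<in>W. P x * ((if x = a then 1 else 0) - (if x = b then 1 else 0) - (P a - P b))^2)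
           / (real t * (P a - P b)^2)"
proof -
  define d where "d = P a - P b"
  have d: "d > 0" using ab unfolding d_def by simp
  define f where "f x = (if x = a then 1 else 0) - (if x = b then 1 else 0) - d" for x
  have "(\<Sum>x\<in>W. P x * f x) = (\<Sum>x\<in>W. (if x = a then P x else 0)) - (\<Sum>x\<in>W. (if x = b then P x else 0)) - d * (\<Sum>x\<in>W. P x)"
    unfolding f_def sum_distrib_left sum_subtractf[symmetric] by (rule sum.cong) (auto simp: algebra_simps)
  also have "\<dots> = 0" using ab W P1 unfolding d_def by simp
  finally have f0: "(\<Sum>x\<in>W. P x * f x) = 0" .
  let ?A = "{xs. set xs \<subseteq> W \<and> length xs = t}"
  let ?K = "\<Sum>x\<in>W. P x * (f x)^2"
  have pw: "prod_list (map P xs) * (if count_list xs a \<le> count_list xs b then 1 else 0)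
       \<le> prod_list (map P xs) * (sum_list (map f xs))^2 / (real t * d)^2" if xs: "xs \<in> ?A" for xs
  proof -
    have pn: "prod_list (map P xs) \<ge> 0" using xs P0 prod_list_nonneg_P by blast
    have S: "sum_list (map f xs) = real (count_list xs a) - real (count_list xs b) - real t * d"
      unfolding f_def using sum_list_f[of a b d xs] xs by simp
    have "(if count_list xs a \<le> count_list xs b then 1 else 0) \<le> (sum_list (map f xs))^2 / (real t * d)^2"
    proof (cases "count_list xs a \<le> count_list xs b")
      case True
      then have "sum_list (map f xs) \<le> - (real t * d)" unfolding S by simp
      moreover have "real t * d > 0" using t d by simp
      ultimately have "(real t * d)^2 \<le> (- sum_list (map f xs))^2"
        by (intro power_mono) auto
      then have "(real t * d)^2 \<le> (sum_list (map f xs))^2" by simp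
      moreover have "(real t * d)^2 > 0" using \<open>real t * d > 0\<close> by (simp only: zero_less_power)
      ultimately show ?thesis using True by (simp add: le_divide_eq)
    qed simp
    then show ?thesis using pn
      by (metis (no_types, lifting) mult_left_mono times_divide_eq_right)
  qed
  have "(\<Sum>xs\<in>?A. prod_list (map P xs) * (if count_list xs a \<le> count_list xs b then 1 else 0))
      \<le> (\<Sum>xs\<in>?A. prod_list (map P xs) * (sum_list (map f xs))^2 / (real t * d)^2)"
    by (rule sum_mono) (rule pw)
  also have "\<dots> = real t * ?K / (real t * d)^2"
    unfolding sum_divide_distrib[symmetric] moment2[OF W P1 f0] ..
  also have "\<dots> = ?K / (real t * d^2)"
    using t d by (simp add: power2_eq_square field_simps)
  finally show ?thesis unfolding f_def d_def .
qed



lemma sorted_wrt_triv: "sorted_wrt (\<lambda>a b. True) xs"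
  by (induction xs) auto

theorem theorem4:
  fixes m :: nat and P c :: "bool list \<Rightarrow> real" and ws ys :: "bool list list"
  assumes "m \<ge> 1"
    and "\<forall>w. length w = m \<longrightarrow> P w \<ge> 0"
    and "(\<Sum>w\<in>{w. length w = m}. P w) = 1"
    and "distinct ws" and "set ws = {w. length w = m}"
    and "sorted_wrt (\<lambda>a b. P a \<ge> P b) ws"
    and "distinct ys" and "set ys = {w. length w = m}"
    and "sorted_wrt (\<lambda>a b. c a \<le> c b) ys"
  shows "(\<lambda>t. expected_avg_cost m P c ys t) \<longlonglongrightarrow> (\<Sum>i<2^m. P (ws ! i) * c (ys ! i))"
proof -
  define W where "W = {w::bool list. length w = m}"
  have P0: "\<forall>x\<in>W. P x \<ge> 0" using assms(2) unfolding W_def by auto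
  have P1: "(\<Sum>x\<in>W. P x) = 1" using assms(3) unfolding W_def by simp
  have Weq: "W = {xs. set xs \<subseteq> (UNIV::bool set) \<and> length xs = m}" unfolding W_def by simp
  have Wfin: "finite W" unfolding Weq by (rule finite_lists_length_eq) simp
  have Wcard: "card W = 2^m"
  proof -
    have "card {xs. set xs \<subseteq> (UNIV::bool set) \<and> length xs = m} = card (UNIV::bool set)^m"
      by (rule card_lists_length_eq) simp
    then show ?thesis unfolding Weq by simp
  qed
  have Ple1: "P x \<le> 1" if "x \<in> W" for x
    using member_le_sum[of x W P] that P0 P1 Wfin by simp
  have lws: "length ws = 2^m" using distinct_card[OF assms(4)] Wcard unfolding assms(5) W_def by simp
  have wsW: "ws ! i \<in> W" if "i < 2^m" for i
  proof -
    have "ws ! i \<in> set ws" using that lws by simp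
    then show ?thesis using assms(5) unfolding W_def by simp
  qed
  define A where "A t = {xs. set xs \<subseteq> W \<and> length xs = t}" for t
  have Aeq: "{xs. length xs = t \<and> (\<forall>x\<in>set xs. length x = m)} = A t" for t
    unfolding A_def W_def by auto
  define s0 where "s0 = (lex_words m, (\<lambda>_::bool list. 0::nat))"
  define Lx where "Lx xs = fst (foldl stp s0 xs)" for xs
  have inv0: "invL W (snd s0) (fst s0)"
    unfolding invL_def s0_def W_def using lex_words_set lex_words_distinct sorted_wrt_triv
    by simp
  have invx: "invL W (count_list xs) (Lx xs)" if "xs \<in> A t" for xs t
  proof -
    have "invL W (snd (foldl stp s0 xs)) (fst (foldl stp s0 xs))"
      using invL_foldl[OF inv0] that unfolding A_def by auto
    moreover have "snd (foldl stp s0 xs) = count_list xs"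
      unfolding counts_foldl by (simp add: s0_def)
    ultimately show ?thesis unfolding Lx_def by simp
  qed
  define h where "h L = (\<Sum>x\<in>W. P x * c (ys ! pos L x))" for L
  define V where "V = (\<Sum>i<2^m. P (ws ! i) * c (ys ! i))"
  have lenL: "length L = 2^m" if "invL W n L" for n L
  proof -
    have "distinct L" "set L = W" using that unfolding invL_def by auto
    then show ?thesis using distinct_card[of L] Wcard by simp
  qed
  have hL: "h L = (\<Sum>i<2^m. P (L ! i) * c (ys ! i))" if "invL W n L" for n L
  proof -
    have d: "distinct L" "set L = W" using that unfolding invL_def by auto
    show ?thesis unfolding h_def sum_h_eq[OF d, of P c ys] lenL[OF that] ..
  qed
  define B where "B = (\<Sum>i<2^m. \<bar>c (ys ! i)\<bar>)"
  have B0: "B \<ge> 0" unfolding B_def by (simp add: sum_nonneg)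
  have hB: "\<bar>h L - V\<bar> \<le> B" if "invL W n L" for n L
  proof -
    have LW: "L ! i \<in> W" if "i < 2^m" for i
    proof -
      have "L ! i \<in> set L" using that lenL[OF \<open>invL W n L\<close>] by simp
      then show ?thesis using \<open>invL W n L\<close> unfolding invL_def by simp
    qed
    have "\<bar>h L - V\<bar> = \<bar>\<Sum>i<2^m. (P (L ! i) - P (ws ! i)) * c (ys ! i)\<bar>"
      unfolding hL[OF that] V_def left_diff_distrib sum_subtractf ..
    also have "\<dots> \<le> (\<Sum>i<2^m. \<bar>(P (L ! i) - P (ws ! i)) * c (ys ! i)\<bar>)" by (rule sum_abs)
    also have "\<dots> \<le> B" unfolding B_def
    proof (rule sum_mono)
      fix i assume "i \<in> {..<(2::nat)^m}"
      then have i: "i < 2^m" by simp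
      have u: "0 \<le> P (L ! i)" "P (L ! i) \<le> 1" "0 \<le> P (ws ! i)" "P (ws ! i) \<le> 1"
        using P0 Ple1 LW[OF i] wsW[OF i] by auto
      have "\<bar>P (L ! i) - P (ws ! i)\<bar> \<le> 1"
        using u by linarith
      then show "\<bar>(P (L ! i) - P (ws ! i)) * c (ys ! i)\<bar> \<le> \<bar>c (ys ! i)\<bar>"
        unfolding abs_mult by (simp add: mult_left_le_one_le)
    qed
    finally show ?thesis .
  qed
  have hgood: "h L = V" if "invL W n L" "\<forall>a\<in>W. \<forall>b\<in>W. P a > P b \<longrightarrow> n a > n b" for n L
  proof -
    have mp: "map P L = map P ws"
      by (rule good_map_eq[OF that(1) assms(4) _ assms(6) that(2)]) (use assms(5) W_def in simp)
    have "P (L ! i) = P (ws ! i)" if "i < 2^m" for i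
    proof -
      have "map P L ! i = map P ws ! i" using mp by simp
      then show ?thesis using that lws lenL[OF \<open>invL W n L\<close>] by simp
    qed
    then show ?thesis unfolding hL[OF that(1)] V_def by simp
  qed
  define g where "g t = (\<Sum>xs\<in>A t. prod_list (map P xs) * h (Lx xs))" for t
  define F where "F t = (\<Sum>xs\<in>A t. prod_list (map P xs) * sum_list (map c (phi m ys xs)))" for t
  have phi_snoc: "phi m ys (xs @ [x]) = phi m ys xs @ [ys ! pos (Lx xs) x]" for xs x
    unfolding phi_def Lx_def s0_def using encode_snoc by metis
  have FSuc: "F (Suc t) = F t + g t" for t
  proof -
    have "(\<Sum>x\<in>W. prod_list (map P (xs @ [x])) * sum_list (map c (phi m ys (xs @ [x]))))
        = prod_list (map P xs) * sum_list (map c (phi m ys xs)) + prod_list (map P xs) * h (Lx xs)" for xs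
    proof -
      have "(\<Sum>x\<in>W. prod_list (map P (xs @ [x])) * sum_list (map c (phi m ys (xs @ [x]))))
        = (\<Sum>x\<in>W. prod_list (map P xs) * sum_list (map c (phi m ys xs)) * P x
             + prod_list (map P xs) * (P x * c (ys ! pos (Lx xs) x)))"
        unfolding phi_snoc by (rule sum.cong) (auto simp: algebra_simps)
      also have "\<dots> = prod_list (map P xs) * sum_list (map c (phi m ys xs)) + prod_list (map P xs) * h (Lx xs)"
        by (simp add: sum.distrib sum_distrib_left[symmetric] P1 h_def)
      finally show ?thesis .
    qed
    then show ?thesis
      unfolding F_def g_def A_def sumA_Suc[OF Wfin] by (simp add: sum.distrib)
  qed
  have F0: "F 0 = 0"
  proof -
    have "A 0 = {[]}" unfolding A_def by auto
    then show ?thesis unfolding F_def phi_def by simp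
  qed
  have Fsum: "F t = (\<Sum>s<t. g s)" for t
    by (induction t) (simp_all add: F0 FSuc)
  have eac: "expected_avg_cost m P c ys t = (\<Sum>s<t. g s) / real t" for t
    unfolding expected_avg_cost_def Aeq Fsum[symmetric] F_def sum_divide_distrib by simp
  define Pr where "Pr = {p \<in> W \<times> W. P (fst p) > P (snd p)}"
  have Prfin: "finite Pr" unfolding Pr_def using Wfin by simp
  define ind where "ind (p::bool list \<times> bool list) (xs::bool list list) = (if count_list xs (fst p) \<le> count_list xs (snd p) then 1 else (0::real))" for p xs
  define K where "K (p::bool list \<times> bool list) = (\<Sum>x\<in>W. P x * ((if x = fst p then 1 else 0) - (if x = snd p then 1 else 0) - (P (fst p) - P (snd p)))^2) / (P (fst p) - P (snd p))^2" for p
  define C where "C = B * (\<Sum>p\<in>Pr. K p)"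
  have gbound: "\<bar>g t - V\<bar> \<le> C / real t" if t: "t > 0" for t
  proof -
    have pn: "prod_list (map P xs) \<ge> 0" if "xs \<in> A t" for xs
      using that P0 prod_list_nonneg_P unfolding A_def by blast
    have pw: "\<bar>h (Lx xs) - V\<bar> \<le> B * (\<Sum>p\<in>Pr. ind p xs)" if xs: "xs \<in> A t" for xs
    proof (cases "\<forall>p\<in>Pr. ind p xs = 0")
      case True
      then have "\<forall>a\<in>W. \<forall>b\<in>W. P a > P b \<longrightarrow> count_list xs a > count_list xs b"
        unfolding Pr_def ind_def by (auto split: if_splits simp: not_le)
      then have "h (Lx xs) = V" using hgood invx[OF xs] by blast
      then show ?thesis using B0 by (simp add: sum_nonneg ind_def)
    next
      case False
      then obtain p where p: "p \<in> Pr" "ind p xs \<noteq> 0" by blast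
      then have "1 \<le> (\<Sum>p\<in>Pr. ind p xs)"
        using member_le_sum[of p Pr "\<lambda>p. ind p xs"] Prfin unfolding ind_def
        by (auto split: if_splits)
      then have "B \<le> B * (\<Sum>p\<in>Pr. ind p xs)" using B0 by (simp add: mult_le_cancel_left1)
      then show ?thesis using hB[OF invx[OF xs]] by linarith
    qed
    have e1: "(\<Sum>xs\<in>A t. prod_list (map P xs) * (h (Lx xs) - V))
        = g t - (\<Sum>xs\<in>A t. prod_list (map P xs) * V)"
      unfolding g_def by (simp add: right_diff_distrib sum_subtractf)
    have e2: "(\<Sum>xs\<in>A t. prod_list (map P xs) * V) = V"
      using moment0[OF Wfin P1, of t] unfolding A_def sum_distrib_right[symmetric] by simp
    have "g t - V = (\<Sum>xs\<in>A t. prod_list (map P xs) * (h (Lx xs) - V))"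
      using e1 e2 by simp
    then have "\<bar>g t - V\<bar> \<le> (\<Sum>xs\<in>A t. \<bar>prod_list (map P xs) * (h (Lx xs) - V)\<bar>)"
      using sum_abs by metis
    also have "\<dots> \<le> (\<Sum>xs\<in>A t. prod_list (map P xs) * (B * (\<Sum>p\<in>Pr. ind p xs)))"
      by (rule sum_mono) (use pn pw in \<open>auto simp: abs_mult intro: mult_left_mono\<close>)
    also have "\<dots> = B * (\<Sum>xs\<in>A t. \<Sum>p\<in>Pr. prod_list (map P xs) * ind p xs)"
      by (simp add: sum_distrib_left mult.left_commute)
    also have "\<dots> = B * (\<Sum>p\<in>Pr. \<Sum>xs\<in>A t. prod_list (map P xs) * ind p xs)"
      by (subst sum.swap) (rule refl)
    also have "\<dots> \<le> B * (\<Sum>p\<in>Pr. K p / real t)"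
    proof (intro mult_left_mono sum_mono B0)
      fix p assume p: "p \<in> Pr"
      then obtain a b where ab: "p = (a, b)" "a \<in> W" "b \<in> W" "P a > P b" unfolding Pr_def by auto
      then have "a \<noteq> b" by auto
      have "(\<Sum>xs\<in>A t. prod_list (map P xs) * ind p xs)
          \<le> (\<Sum>x\<in>W. P x * ((if x = a then 1 else 0) - (if x = b then 1 else 0) - (P a - P b))^2)
             / (real t * (P a - P b)^2)"
        unfolding A_def ind_def ab(1) fst_conv snd_conv
        by (rule bad_pair_bound[OF Wfin P1 P0 ab(2,3) \<open>a \<noteq> b\<close> ab(4) t])
      also have "\<dots> = K p / real t" unfolding K_def ab(1) by simp
      finally show "(\<Sum>xs\<in>A t. prod_list (map P xs) * ind p xs) \<le> K p / real t" .
    qed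
    also have "\<dots> = C / real t" unfolding C_def by (simp add: sum_divide_distrib[symmetric])
    finally show ?thesis .
  qed
  have "(\<lambda>t. g t - V) \<longlonglongrightarrow> 0"
  proof (rule Lim_null_comparison)
    show "\<forall>\<^sub>F t in sequentially. norm (g t - V) \<le> C / real t"
      using gbound eventually_sequentially[of "\<lambda>t. norm (g t - V) \<le> C / real t"]
      by (metis One_nat_def Suc_le_eq real_norm_def)
    show "(\<lambda>t. C / real t) \<longlonglongrightarrow> 0" by (rule lim_const_over_n)
  qed
  then have "g \<longlonglongrightarrow> V" by (rule LIM_zero_cancel)
  then have "(\<lambda>t. (\<Sum>s<t. g s) / real t) \<longlonglongrightarrow> V" by (rule cesaro)
  then show ?thesis unfolding eac V_def .
qed

end
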